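(* Let $G$ be a finite, simple, undirected, connected graph that is $C_4$-free, has order $n$, diameter $d$, and edge-connectivity $\lambda\geq 4$. Then $$d\leq \frac{n-3}{3}.$$
   Context: A graph is $C_4$-free if it contains no cycle of length four as a (not necessarily induced) subgraph. The edge-connectivity of a connected graph is the minimum number of edges whose removal disconnects it. *)

theory Defs
  imports Complex_Main
begin

definition simple_graph :: "'a set \<Rightarrow> ('a \<Rightarrow> 'a \<Rightarrow> bool) \<Rightarrow> bool" where
  "simple_graph V E \<longleftrightarrow> finite V \<and> (\<forall>x y. E x y \<longrightarrow> x \<in> V \<and> y \<in> V)
     \<and> (\<forall>x y. E x y \<longrightarrow> E y x) \<and> (\<forall>x. \<not> E x x)"

definition is_walk :: "'a set \<Rightarrow> ('a \<Rightarrow> 'a \<Rightarrow> bool) \<Rightarrow> 'a list \<Rightarrow> bool" where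
  "is_walk V E xs \<longleftrightarrow> xs \<noteq> [] \<and> set xs \<subseteq> V \<and>
     (\<forall>i. Suc i < length xs \<longrightarrow> E (xs ! i) (xs ! Suc i))"

definition walk_betw :: "'a set \<Rightarrow> ('a \<Rightarrow> 'a \<Rightarrow> bool) \<Rightarrow> 'a \<Rightarrow> 'a list \<Rightarrow> 'a \<Rightarrow> bool" where
  "walk_betw V E u xs v \<longleftrightarrow> is_walk V E xs \<and> hd xs = u \<and> last xs = v"

definition connected_graph :: "'a set \<Rightarrow> ('a \<Rightarrow> 'a \<Rightarrow> bool) \<Rightarrow> bool" where
  "connected_graph V E \<longleftrightarrow> V \<noteq> {} \<and> (\<forall>u\<in>V. \<forall>v\<in>V. \<exists>xs. walk_betw V E u xs v)"

text \<open>Distance: length of a shortest walk (meaningful in a connected graph).\<close>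
definition dist :: "'a set \<Rightarrow> ('a \<Rightarrow> 'a \<Rightarrow> bool) \<Rightarrow> 'a \<Rightarrow> 'a \<Rightarrow> nat" where
  "dist V E u v = (LEAST k. \<exists>xs. walk_betw V E u xs v \<and> length xs = Suc k)"

definition diameter :: "'a set \<Rightarrow> ('a \<Rightarrow> 'a \<Rightarrow> bool) \<Rightarrow> nat" where
  "diameter V E = Max {dist V E u v | u v. u \<in> V \<and> v \<in> V}"

definition C4_free :: "('a \<Rightarrow> 'a \<Rightarrow> bool) \<Rightarrow> bool" where
  "C4_free E \<longleftrightarrow> \<not> (\<exists>a b c d. distinct [a, b, c, d] \<and> E a b \<and> E b c \<and> E c d \<and> E d a)"

definition edges :: "('a \<Rightarrow> 'a \<Rightarrow> bool) \<Rightarrow> 'a set set" where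
  "edges E = {{x, y} | x y. E x y}"

definition remove_edges :: "('a \<Rightarrow> 'a \<Rightarrow> bool) \<Rightarrow> 'a set set \<Rightarrow> 'a \<Rightarrow> 'a \<Rightarrow> bool" where
  "remove_edges E F = (\<lambda>x y. E x y \<and> {x, y} \<notin> F)"

text \<open>Edge-connectivity at least k: the graph is nontrivial (at least two
vertices, so the trivial graph has edge-connectivity 0) and removing any
set of fewer than k edges leaves it connected; i.e. every disconnecting
edge set has at least k edges.\<close>
definition edge_connectivity_ge :: "'a set \<Rightarrow> ('a \<Rightarrow> 'a \<Rightarrow> bool) \<Rightarrow> nat \<Rightarrow> bool" where
  "edge_connectivity_ge V E k \<longleftrightarrow> card V \<ge> 2 \<and>
     (\<forall>F. F \<subseteq> edges E \<and> card F < k \<longrightarrow> connected_graph V (remove_edges E F))"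

end

theory Submission
  imports Defs
begin

locale cgraph =
  fixes V :: "'a set" and E :: "'a \<Rightarrow> 'a \<Rightarrow> bool"
  assumes sg: "simple_graph V E"
    and conn: "connected_graph V E"
    and c4: "C4_free E"
    and ec: "edge_connectivity_ge V E 4"
begin

lemma finV: "finite V" using sg by (simp add: simple_graph_def)
lemma inV1: "E x y \<Longrightarrow> x \<in> V" using sg by (simp add: simple_graph_def)
lemma inV2: "E x y \<Longrightarrow> y \<in> V" using sg by (simp add: simple_graph_def)
lemma symE: "E x y \<Longrightarrow> E y x" using sg by (simp add: simple_graph_def)
lemma irrE: "\<not> E x x" using sg by (simp add: simple_graph_def)

definition nb :: "'a \<Rightarrow> 'a set" where "nb x = {y. E x y}"

lemma nb_sub: "nb x \<subseteq> V" using inV2 by (auto simp: nb_def)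
lemma fin_nb: "finite (nb x)" using nb_sub finV finite_subset by blast

lemma walk_ex: "u \<in> V \<Longrightarrow> v \<in> V \<Longrightarrow> \<exists>xs. walk_betw V E u xs v"
  using conn by (simp add: connected_graph_def)

lemma dist_walk:
  assumes "u \<in> V" "v \<in> V"
  shows "\<exists>xs. walk_betw V E u xs v \<and> length xs = Suc (dist V E u v)"
proof -
  obtain xs where xs: "walk_betw V E u xs v" using walk_ex assms by blast
  then have "length xs = Suc (length xs - 1)" by (cases xs) (auto simp: walk_betw_def is_walk_def)
  with xs have "\<exists>k. \<exists>xs. walk_betw V E u xs v \<and> length xs = Suc k" by blast
  then show ?thesis unfolding dist_def by (rule LeastI_ex)
qed

lemma dist_le: assumes "walk_betw V E u xs v" shows "dist V E u v \<le> length xs - 1"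
proof -
  have "length xs = Suc (length xs - 1)" using assms by (cases xs) (auto simp: walk_betw_def is_walk_def)
  with assms have "\<exists>ys. walk_betw V E u ys v \<and> length ys = Suc (length xs - 1)" by blast
  then show ?thesis unfolding dist_def by (rule Least_le)
qed

lemma dist_self: "u \<in> V \<Longrightarrow> dist V E u u = 0"
  using dist_le[of u "[u]" u] by (simp add: walk_betw_def is_walk_def)

lemma dist_0: assumes "u \<in> V" "v \<in> V" "dist V E u v = 0" shows "u = v"
proof -
  obtain xs where "walk_betw V E u xs v" "length xs = 1" using dist_walk assms by force
  then show ?thesis by (cases xs) (auto simp: walk_betw_def)
qed

lemma dist_step:
  assumes "u \<in> V" "E w z"
  shows "dist V E u z \<le> Suc (dist V E u w)"
proof -
  have w: "w \<in> V" "z \<in> V" using assms inV1 inV2 by auto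
  obtain xs where xs: "walk_betw V E u xs w" "length xs = Suc (dist V E u w)"
    using dist_walk assms w by blast
  have "walk_betw V E u (xs @ [z]) z"
    unfolding walk_betw_def is_walk_def
  proof (intro conjI allI impI)
    show "set (xs @ [z]) \<subseteq> V" using xs w by (auto simp: walk_betw_def is_walk_def)
    show "hd (xs @ [z]) = u" using xs by (auto simp: walk_betw_def is_walk_def)
    fix i assume i: "Suc i < length (xs @ [z])"
    show "E ((xs @ [z]) ! i) ((xs @ [z]) ! Suc i)"
    proof (cases "Suc i < length xs")
      case True then show ?thesis using xs by (auto simp: walk_betw_def is_walk_def nth_append)
    next
      case False
      then have "i = length xs - 1" "xs \<noteq> []" using i xs by (auto simp: walk_betw_def is_walk_def)
      moreover have "last xs = w" using xs by (simp add: walk_betw_def)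
      ultimately show ?thesis using assms(2) by (simp add: nth_append last_conv_nth)
    qed
  qed simp_all
  from dist_le[OF this] xs show ?thesis by simp
qed

lemma dist_pred:
  assumes "u \<in> V" "v \<in> V" "dist V E u v = Suc k"
  shows "\<exists>w. E w v \<and> dist V E u w = k"
proof -
  obtain xs where xs: "walk_betw V E u xs v" "length xs = Suc (Suc k)"
    using dist_walk assms by force
  define w where "w = xs ! k"
  have Ew: "E w v"
  proof -
    have "E (xs ! k) (xs ! Suc k)" using xs by (auto simp: walk_betw_def is_walk_def)
    moreover have "xs \<noteq> []" using xs(2) by auto
    then have "last xs = xs ! Suc k" using xs(2) by (simp add: last_conv_nth)
    then have "xs ! Suc k = v" using xs(1) by (simp add: walk_betw_def)
    ultimately show ?thesis by (simp add: w_def)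
  qed
  have lt: "last (take (Suc k) xs) = xs ! k"
  proof -
    have "take (Suc k) xs \<noteq> []" "length (take (Suc k) xs) = Suc k" using xs(2) by auto
    then show ?thesis by (simp add: last_conv_nth)
  qed
  have "walk_betw V E u (take (Suc k) xs) w"
    using xs lt unfolding walk_betw_def is_walk_def w_def
    by (auto simp: hd_take dest: in_set_takeD)
  from dist_le[OF this] xs have "dist V E u w \<le> k" by simp
  moreover have "dist V E u v \<le> Suc (dist V E u w)" using dist_step[OF assms(1) Ew] .
  ultimately show ?thesis using Ew assms(3) by (intro exI[of _ w]) simp
qed

lemma dist_lip: "u \<in> V \<Longrightarrow> E w z \<Longrightarrow> dist V E u w \<le> Suc (dist V E u z)"
  using dist_step symE by blast

lemma walk_noedge:
  assumes "walk_betw V E' u xs w" "u \<noteq> w"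
  shows "E' u (xs ! 1)"
proof -
  have "length xs \<noteq> 1" using assms by (cases xs) (auto simp: walk_betw_def)
  moreover have "xs \<noteq> []" using assms by (auto simp: walk_betw_def is_walk_def)
  ultimately have "Suc 0 < length xs" by (cases xs) auto
  then have "E' (xs ! 0) (xs ! 1)" using assms by (auto simp: walk_betw_def is_walk_def)
  moreover have "xs ! 0 = u" using assms \<open>xs \<noteq> []\<close> by (auto simp: walk_betw_def hd_conv_nth)
  ultimately show ?thesis by simp
qed

lemma deg4: assumes "x \<in> V" shows "4 \<le> card (nb x)"
proof (rule ccontr)
  assume "\<not> 4 \<le> card (nb x)"
  define F where "F = (\<lambda>y. {x, y}) ` nb x"
  have "card F \<le> card (nb x)" unfolding F_def by (rule card_image_le[OF fin_nb])
  then have "card F < 4" using \<open>\<not> 4 \<le> card (nb x)\<close> by simp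
  moreover have "F \<subseteq> edges E" by (auto simp: F_def edges_def nb_def)
  ultimately have cg: "connected_graph V (remove_edges E F)"
    using ec by (simp add: edge_connectivity_ge_def)
  have "2 \<le> card V" using ec by (simp add: edge_connectivity_ge_def)
  then obtain z where z: "z \<in> V" "z \<noteq> x"
  proof -
    assume h: "\<And>z. z \<in> V \<Longrightarrow> z \<noteq> x \<Longrightarrow> thesis"
    show thesis
    proof (rule ccontr)
      assume "\<not> thesis"
      then have "V \<subseteq> {x}" using h by blast
      then have "card V \<le> 1" using card_mono[of "{x}" V] by simp
      then show False using \<open>2 \<le> card V\<close> by simp
    qed
  qed
  obtain xs where "walk_betw V (remove_edges E F) x xs z"
    using cg assms z by (auto simp: connected_graph_def)
  from walk_noedge[OF this z(2)[symmetric]] show False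
    by (auto simp: remove_edges_def F_def nb_def)
qed

lemma common_le1: assumes "x \<noteq> y" shows "card (nb x \<inter> nb y) \<le> 1"
proof -
  have "\<forall>p\<in>nb x \<inter> nb y. \<forall>q\<in>nb x \<inter> nb y. p = q"
  proof (intro ballI, rule ccontr)
    fix p q assume pq: "p \<in> nb x \<inter> nb y" "q \<in> nb x \<inter> nb y" "p \<noteq> q"
    then have e: "E x p" "E p y" "E y q" "E q x" using symE by (auto simp: nb_def)
    have "x \<noteq> p" "x \<noteq> q" "y \<noteq> p" "y \<noteq> q" using e irrE symE by metis+
    with e pq assms have "distinct [x, p, y, q] \<and> E x p \<and> E p y \<and> E y q \<and> E q x" by auto
    then show False using c4 unfolding C4_free_def by blast
  qed
  then show ?thesis using card_le_Suc0_iff_eq[of "nb x \<inter> nb y"] fin_nb by simp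
qed

definition cut :: "'a \<Rightarrow> nat \<Rightarrow> 'a set set" where
  "cut v j = {{a, b} | a b. E a b \<and> dist V E v a < j \<and> j \<le> dist V E v b}"

lemma cut4:
  assumes "v \<in> V" "w \<in> V" "1 \<le> j" "j \<le> dist V E v w"
  shows "4 \<le> card (cut v j)"
proof (rule ccontr)
  assume "\<not> 4 \<le> card (cut v j)"
  moreover have "cut v j \<subseteq> edges E" by (auto simp: cut_def edges_def)
  ultimately have cg: "connected_graph V (remove_edges E (cut v j))"
    using ec by (simp add: edge_connectivity_ge_def)
  obtain xs where xs: "walk_betw V (remove_edges E (cut v j)) v xs w"
    using cg assms by (auto simp: connected_graph_def)
  have ne: "xs \<noteq> []" using xs by (simp add: walk_betw_def is_walk_def)
  have "\<forall>m. m < length xs \<longrightarrow> dist V E v (xs ! m) < j"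
  proof (intro allI)
    fix m show "m < length xs \<longrightarrow> dist V E v (xs ! m) < j"
    proof (induction m)
      case 0
      then show ?case using xs ne assms dist_self by (auto simp: walk_betw_def hd_conv_nth)
    next
      case (Suc m)
      show ?case
      proof
        assume m: "Suc m < length xs"
        then have "remove_edges E (cut v j) (xs ! m) (xs ! Suc m)"
          using xs by (auto simp: walk_betw_def is_walk_def)
        then have e: "E (xs ! m) (xs ! Suc m)" "{xs ! m, xs ! Suc m} \<notin> cut v j"
          by (auto simp: remove_edges_def)
        have "dist V E v (xs ! m) < j" using Suc m by simp
        then show "dist V E v (xs ! Suc m) < j" using e unfolding cut_def by force
      qed
    qed
  qed
  then have "dist V E v (last xs) < j" using ne by (simp add: last_conv_nth)
  then show False using xs assms by (simp add: walk_betw_def)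
qed

definition L :: "'a \<Rightarrow> nat \<Rightarrow> 'a set" where "L v k = {w \<in> V. dist V E v w = k}"
definition NA :: "'a \<Rightarrow> nat \<Rightarrow> 'a \<Rightarrow> 'a set" where "NA v i b = {a. E b a \<and> dist V E v a < i}"
definition NC :: "'a \<Rightarrow> nat \<Rightarrow> 'a \<Rightarrow> 'a set" where "NC v i b = {c. E b c \<and> i < dist V E v c}"

lemma finL: "finite (L v k)" using finV by (simp add: L_def)
lemma finNA: "finite (NA v i b)" using fin_nb by (rule rev_finite_subset) (auto simp: NA_def nb_def)
lemma finNC: "finite (NC v i b)" using fin_nb by (rule rev_finite_subset) (auto simp: NC_def nb_def)

lemma cut_lo:
  assumes "v \<in> V" "w \<in> V" "1 \<le> i" "i \<le> dist V E v w"
  shows "4 \<le> (\<Sum>b\<in>L v i. card (NA v i b))"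
proof -
  have "cut v i \<subseteq> (\<Union>b\<in>L v i. (\<lambda>a. {a, b}) ` NA v i b)"
  proof
    fix e assume "e \<in> cut v i"
    then obtain a b where ab: "e = {a, b}" "E a b" "dist V E v a < i" "i \<le> dist V E v b"
      by (auto simp: cut_def)
    have "dist V E v b \<le> Suc (dist V E v a)" using dist_step[OF assms(1) ab(2)] .
    then have "b \<in> L v i" using ab inV2 by (auto simp: L_def)
    moreover have "a \<in> NA v i b" using ab symE by (auto simp: NA_def)
    ultimately show "e \<in> (\<Union>b\<in>L v i. (\<lambda>a. {a, b}) ` NA v i b)" using ab by blast
  qed
  then have "card (cut v i) \<le> card (\<Union>b\<in>L v i. (\<lambda>a. {a, b}) ` NA v i b)"
    by (intro card_mono) (auto intro: finL finNA)
  also have "\<dots> \<le> (\<Sum>b\<in>L v i. card ((\<lambda>a. {a, b}) ` NA v i b))"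
    by (rule card_UN_le[OF finL])
  also have "\<dots> \<le> (\<Sum>b\<in>L v i. card (NA v i b))"
    by (intro sum_mono card_image_le finNA)
  finally show ?thesis using cut4[OF assms] by simp
qed

lemma cut_hi:
  assumes "v \<in> V" "w \<in> V" "Suc i \<le> dist V E v w"
  shows "4 \<le> (\<Sum>b\<in>L v i. card (NC v i b))"
proof -
  have "cut v (Suc i) \<subseteq> (\<Union>b\<in>L v i. (\<lambda>c. {b, c}) ` NC v i b)"
  proof
    fix e assume "e \<in> cut v (Suc i)"
    then obtain a b where ab: "e = {a, b}" "E a b" "dist V E v a < Suc i" "Suc i \<le> dist V E v b"
      by (auto simp: cut_def)
    have "dist V E v b \<le> Suc (dist V E v a)" using dist_step[OF assms(1) ab(2)] .
    then have "a \<in> L v i" using ab inV1 by (auto simp: L_def)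
    moreover have "b \<in> NC v i a" using ab by (auto simp: NC_def)
    ultimately show "e \<in> (\<Union>b\<in>L v i. (\<lambda>c. {b, c}) ` NC v i b)" using ab by blast
  qed
  then have "card (cut v (Suc i)) \<le> card (\<Union>b\<in>L v i. (\<lambda>c. {b, c}) ` NC v i b)"
    by (intro card_mono) (auto intro: finL finNC)
  also have "\<dots> \<le> (\<Sum>b\<in>L v i. card ((\<lambda>c. {b, c}) ` NC v i b))"
    by (rule card_UN_le[OF finL])
  also have "\<dots> \<le> (\<Sum>b\<in>L v i. card (NC v i b))"
    by (intro sum_mono card_image_le finNC)
  finally show ?thesis using cut4[OF assms(1,2) _ assms(3)] by simp
qed

lemma nb_layers:
  assumes "v \<in> V" "b \<in> L v i" "1 \<le> i" "E b y"
  shows "y \<in> L v (i - 1) \<union> L v i \<union> L v (Suc i)"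
  using dist_step[OF assms(1) assms(4)] dist_lip[OF assms(1) assms(4)] assms inV2[OF assms(4)]
  by (auto simp: L_def)

lemma NA_sub: "v \<in> V \<Longrightarrow> b \<in> L v i \<Longrightarrow> NA v i b \<subseteq> L v (i - 1)"
  using dist_lip inV2 by (fastforce simp: L_def NA_def)
lemma NC_sub: "v \<in> V \<Longrightarrow> b \<in> L v i \<Longrightarrow> NC v i b \<subseteq> L v (Suc i)"
  using dist_step inV2 by (fastforce simp: L_def NC_def)

definition P :: "'a \<Rightarrow> 'a \<Rightarrow> 'a set" where "P x y = nb y - insert x (nb x)"

lemma finP: "finite (P x y)" using fin_nb by (simp add: P_def)

lemma P_card: assumes "y \<in> nb x" shows "2 \<le> card (P x y)"
proof -
  have xy: "x \<noteq> y" using assms irrE by (auto simp: nb_def)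
  have V: "y \<in> V" using assms nb_sub by auto
  have "nb y \<subseteq> P x y \<union> insert x (nb x \<inter> nb y)" by (auto simp: P_def)
  then have "card (nb y) \<le> card (P x y \<union> insert x (nb x \<inter> nb y))"
    by (intro card_mono) (auto intro: finP fin_nb)
  also have "\<dots> \<le> card (P x y) + card (insert x (nb x \<inter> nb y))"
    by (rule card_Un_le)
  also have "\<dots> \<le> card (P x y) + Suc (card (nb x \<inter> nb y))"
    using card_insert_le_m1 by (simp add: card_insert_if fin_nb)
  finally show ?thesis using deg4[OF V] common_le1[OF xy] by simp
qed

lemma P_disj:
  assumes "y1 \<in> nb x" "y2 \<in> nb x" "y1 \<noteq> y2"
  shows "P x y1 \<inter> P x y2 = {}"
proof -
  have "x \<in> nb y1 \<inter> nb y2" using assms symE by (auto simp: nb_def)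
  then have "\<forall>z\<in>nb y1 \<inter> nb y2. z = x"
    using common_le1[OF assms(3)] card_le_Suc0_iff_eq[of "nb y1 \<inter> nb y2"] fin_nb by auto
  then show ?thesis by (auto simp: P_def)
qed

lemma UP_card: assumes "Y \<subseteq> nb x" shows "2 * card Y \<le> card (\<Union>y\<in>Y. P x y)"
proof -
  have fY: "finite Y" using assms fin_nb finite_subset by blast
  have "card (\<Union>y\<in>Y. P x y) = (\<Sum>y\<in>Y. card (P x y))"
    using P_disj assms by (intro card_UN_disjoint fY) (auto intro: finP)
  moreover have "(\<Sum>y\<in>Y. 2) \<le> (\<Sum>y\<in>Y. card (P x y))"
    using P_card assms by (intro sum_mono) auto
  ultimately show ?thesis by simp
qed

lemma ball_card: assumes "x \<in> V" "Y \<subseteq> nb x"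
  shows "5 + 2 * card Y \<le> card (insert x (nb x) \<union> (\<Union>y\<in>Y. P x y))"
proof -
  have "x \<notin> nb x" using irrE by (simp add: nb_def)
  then have "card (insert x (nb x)) = Suc (card (nb x))" by (simp add: fin_nb)
  moreover have "card (insert x (nb x) \<union> (\<Union>y\<in>Y. P x y)) = card (insert x (nb x)) + card (\<Union>y\<in>Y. P x y)"
    using assms fin_nb finite_subset[OF assms(2) fin_nb]
    by (intro card_Un_disjoint) (auto simp: P_def intro: finP)
  ultimately show ?thesis using deg4[OF assms(1)] UP_card[OF assms(2)] by simp
qed

lemma triple:
  assumes v: "v \<in> V" and w: "w \<in> V" and i: "1 \<le> i" and iw: "Suc i \<le> dist V E v w"
  shows "9 \<le> card (L v (i - 1)) + card (L v i) + card (L v (Suc i))"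
proof -
  define A where "A = L v (i - 1)"
  define B where "B = L v i"
  define C where "C = L v (Suc i)"
  have fA: "finite A" and fB: "finite B" and fC: "finite C" by (simp_all add: A_def B_def C_def finL)
  have dAB: "A \<inter> B = {}" "A \<inter> C = {}" "B \<inter> C = {}" using i by (auto simp: A_def B_def C_def L_def)
  have cardS: "card (A \<union> B \<union> C) = card A + card B + card C"
  proof -
    have "(A \<union> B) \<inter> C = {}" using dAB by blast
    then have "card (A \<union> B \<union> C) = card (A \<union> B) + card C" using fA fB fC by (simp add: card_Un_disjoint)
    then show ?thesis using dAB fA fB by (simp add: card_Un_disjoint)
  qed
  have cardT: "card (A \<union> C) = card A + card C" using dAB fA fC by (simp add: card_Un_disjoint)
  have nbS: "nb b \<subseteq> A \<union> B \<union> C" if "b \<in> B" for b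
  proof
    fix y assume "y \<in> nb b"
    then have "E b y" by (simp add: nb_def)
    from nb_layers[OF v _ i this] that show "y \<in> A \<union> B \<union> C" by (simp add: A_def B_def C_def)
  qed
  have lo: "4 \<le> (\<Sum>b\<in>B. card (NA v i b))" using cut_lo[OF v w i] iw by (simp add: B_def)
  have hi: "4 \<le> (\<Sum>b\<in>B. card (NC v i b))" using cut_hi[OF v w iw] by (simp add: B_def)
  have NAs: "NA v i b \<subseteq> A" if "b \<in> B" for b using NA_sub[OF v] that by (simp add: A_def B_def)
  have NCs: "NC v i b \<subseteq> C" if "b \<in> B" for b using NC_sub[OF v] that by (simp add: C_def B_def)
  have NAC: "NA v i b \<inter> NC v i b = {}" for b by (auto simp: NA_def NC_def)
  have NAnb: "NA v i b \<union> NC v i b \<subseteq> nb b" for b by (auto simp: NA_def NC_def nb_def)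
  have "B \<noteq> {}"
  proof -
    have "i \<le> dist V E v w" using iw by simp
    show ?thesis
    proof
      assume "B = {}" then show False using lo by simp
    qed
  qed
  then have "card B \<noteq> 0" using fB by simp
  then consider "card B = 1" | "card B = 2" | "3 \<le> card B" by linarith
  then show ?thesis
  proof cases
    case 1
    then obtain x where Bx: "B = {x}" by (auto simp: card_Suc_eq)
    have "card (NA v i x) \<le> card A" using NAs[of x] Bx by (intro card_mono fA) auto
    moreover have "card (NC v i x) \<le> card C" using NCs[of x] Bx by (intro card_mono fC) auto
    ultimately show ?thesis using lo hi Bx by (simp add: A_def B_def C_def)
  next
    case 2
    then obtain x y where Bxy: "B = {x, y}" "x \<noteq> y" by (auto simp: card_Suc_eq numeral_eq_Suc)
    define X where "X = NA v i x \<union> NC v i x"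
    define Y where "Y = NA v i y \<union> NC v i y"
    have fX: "finite X" "finite Y" by (simp_all add: X_def Y_def finNA finNC)
    have cX: "card X = card (NA v i x) + card (NC v i x)" "card Y = card (NA v i y) + card (NC v i y)"
      unfolding X_def Y_def by (simp_all add: card_Un_disjoint finNA finNC NAC)
    have "X \<inter> Y \<subseteq> nb x \<inter> nb y" using NAnb unfolding X_def Y_def by blast
    then have "card (X \<inter> Y) \<le> card (nb x \<inter> nb y)" by (intro card_mono) (simp_all add: fin_nb)
    then have "card (X \<inter> Y) \<le> 1" using common_le1[OF Bxy(2)] by linarith
    moreover have "card (X \<union> Y) \<le> card (A \<union> C)"
      using NAs NCs Bxy by (intro card_mono) (auto simp: fA fC X_def Y_def)
    moreover have "card X + card Y = card (X \<union> Y) + card (X \<inter> Y)" using card_Un_Int[OF fX(1) fX(2)] by simp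
    moreover have "card X + card Y \<ge> 8" using lo hi Bxy cX by simp
    ultimately have "7 \<le> card (A \<union> C)" by linarith
    then show ?thesis using cardT Bxy 2 by (simp add: A_def B_def C_def)
  next
    case 3
    show ?thesis
    proof (cases "\<exists>x\<in>B. \<exists>y1\<in>B. \<exists>y2\<in>B. y1 \<noteq> y2 \<and> E x y1 \<and> E x y2")
      case True
      then obtain x y1 y2 where xy: "x \<in> B" "y1 \<in> B" "y2 \<in> B" "y1 \<noteq> y2" "E x y1" "E x y2" by blast
      have xV: "x \<in> V" using xy by (simp add: B_def L_def)
      have Ysub: "{y1, y2} \<subseteq> nb x" using xy by (simp add: nb_def)
      have "5 + 2 * card {y1, y2} \<le> card (insert x (nb x) \<union> (\<Union>y\<in>{y1, y2}. P x y))"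
        by (rule ball_card[OF xV Ysub])
      also have "\<dots> \<le> card (A \<union> B \<union> C)"
      proof (rule card_mono)
        show "finite (A \<union> B \<union> C)" using fA fB fC by simp
        have "P x y1 \<subseteq> nb y1" "P x y2 \<subseteq> nb y2" by (auto simp: P_def)
        then show "insert x (nb x) \<union> (\<Union>y\<in>{y1, y2}. P x y) \<subseteq> A \<union> B \<union> C"
          using nbS[OF xy(1)] nbS[OF xy(2)] nbS[OF xy(3)] xy(1) by blast
      qed
      finally show ?thesis using xy cardS by (simp add: A_def B_def C_def)
    next
      case False
      have few: "card (nb x \<inter> B) \<le> 1" if "x \<in> B" for x
        using False that card_le_Suc0_iff_eq[of "nb x \<inter> B"] fin_nb by (auto simp: nb_def)
      have many: "3 \<le> card (nb x \<inter> (A \<union> C))" if xB: "x \<in> B" for x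
      proof -
        have xV: "x \<in> V" using xB by (simp add: B_def L_def)
        have "nb x \<subseteq> (nb x \<inter> B) \<union> (nb x \<inter> (A \<union> C))" using nbS[OF xB] by blast
        then have "card (nb x) \<le> card ((nb x \<inter> B) \<union> (nb x \<inter> (A \<union> C)))"
          by (intro card_mono) (auto simp: fin_nb)
        also have "\<dots> \<le> card (nb x \<inter> B) + card (nb x \<inter> (A \<union> C))" by (rule card_Un_le)
        finally show ?thesis using deg4[OF xV] few[OF xB] by simp
      qed
      obtain B3 where B3: "B3 \<subseteq> B" "card B3 = 3" using 3 obtain_subset_with_card_n by metis
      then obtain x y z where xyz: "B3 = {x, y, z}" "x \<noteq> y" "y \<noteq> z" "x \<noteq> z" by (auto simp: card_3_iff)
      have inB: "x \<in> B" "y \<in> B" "z \<in> B" using B3 xyz by auto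
      define X where "X = nb x \<inter> (A \<union> C)"
      define Y where "Y = nb y \<inter> (A \<union> C)"
      define Z where "Z = nb z \<inter> (A \<union> C)"
      have f: "finite X" "finite Y" "finite Z" by (simp_all add: X_def Y_def Z_def fin_nb)
      have c3: "3 \<le> card X" "3 \<le> card Y" "3 \<le> card Z" using many inB by (simp_all add: X_def Y_def Z_def)
      have i1: "card (X \<inter> Y) \<le> 1"
      proof -
        have "X \<inter> Y \<subseteq> nb x \<inter> nb y" by (auto simp: X_def Y_def)
        then have "card (X \<inter> Y) \<le> card (nb x \<inter> nb y)" by (intro card_mono) (simp_all add: fin_nb)
        then show ?thesis using common_le1[OF xyz(2)] by linarith
      qed
      have i2: "card (X \<inter> Z) \<le> 1"
      proof -
        have "X \<inter> Z \<subseteq> nb x \<inter> nb z" by (auto simp: X_def Z_def)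
        then have "card (X \<inter> Z) \<le> card (nb x \<inter> nb z)" by (intro card_mono) (simp_all add: fin_nb)
        then show ?thesis using common_le1[OF xyz(4)] by linarith
      qed
      have i3: "card (Y \<inter> Z) \<le> 1"
      proof -
        have "Y \<inter> Z \<subseteq> nb y \<inter> nb z" by (auto simp: Y_def Z_def)
        then have "card (Y \<inter> Z) \<le> card (nb y \<inter> nb z)" by (intro card_mono) (simp_all add: fin_nb)
        then show ?thesis using common_le1[OF xyz(3)] by linarith
      qed
      have u1: "card X + card Y = card (X \<union> Y) + card (X \<inter> Y)" using card_Un_Int[OF f(1) f(2)] by simp
      have u2: "card (X \<union> Y) + card Z = card (X \<union> Y \<union> Z) + card ((X \<union> Y) \<inter> Z)" using card_Un_Int[of "X \<union> Y" Z] f by simp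
      have "card ((X \<union> Y) \<inter> Z) \<le> card (X \<inter> Z) + card (Y \<inter> Z)"
          proof -
        have "(X \<union> Y) \<inter> Z = (X \<inter> Z) \<union> (Y \<inter> Z)" by blast
        then show ?thesis using card_Un_le[of "X \<inter> Z" "Y \<inter> Z"] by simp
      qed
      then have "6 \<le> card (X \<union> Y \<union> Z)" using u1 u2 i1 i2 i3 c3 by linarith
      also have "\<dots> \<le> card (A \<union> C)" by (intro card_mono) (auto simp: X_def Y_def Z_def fA fC)
      finally have "6 \<le> card A + card C" using cardT by simp
      moreover have "3 \<le> card B" using 3 .
      ultimately show ?thesis by (simp add: A_def B_def C_def)
    qed
  qed
qed

lemma layer_ne: "v \<in> V \<Longrightarrow> w \<in> V \<Longrightarrow> k \<le> dist V E v w \<Longrightarrow> \<exists>z\<in>V. dist V E v z = k"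
proof (induction "dist V E v w" arbitrary: w)
  case 0 then show ?case by auto
next
  case (Suc m)
  show ?case
  proof (cases "k = Suc m")
    case True then show ?thesis using Suc by metis
  next
    case False
    obtain w' where w': "E w' w" "dist V E v w' = m" using dist_pred[OF Suc.prems(1,2)] Suc.hyps(2) by metis
    have "w' \<in> V" using w' inV1 by blast
    then show ?thesis using Suc.hyps(1)[of w'] w' Suc False by auto
  qed
qed

lemma dist1: assumes "v \<in> V" shows "(w \<in> V \<and> dist V E v w = 1) \<longleftrightarrow> E v w"
proof
  assume h: "w \<in> V \<and> dist V E v w = 1"
  then obtain w' where "E w' w" "dist V E v w' = 0" using dist_pred[OF assms, of w 0] by auto
  moreover then have "w' = v" using dist_0[OF assms] inV1 by blast
  ultimately show "E v w" by simp
next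
  assume e: "E v w"
  have "dist V E v w \<le> 1" using dist_step[OF assms e] dist_self[OF assms] by simp
  moreover have "w \<noteq> v" using e irrE by auto
  moreover have "w \<in> V" using e inV2 by auto
  ultimately show "w \<in> V \<and> dist V E v w = 1" using dist_0[OF assms] by fastforce
qed

lemma first13: assumes v: "v \<in> V"
  shows "13 \<le> card (L v 0) + card (L v 1) + card (L v 2)" and "L v 2 \<noteq> {}"
proof -
  have L0: "L v 0 = {v}" using dist_0[OF v] dist_self[OF v] v by (auto simp: L_def)
  have L1: "L v 1 = nb v" using dist1[OF v] by (auto simp: L_def nb_def)
  have sub: "(\<Union>y\<in>nb v. P v y) \<subseteq> L v 2"
  proof
    fix z assume "z \<in> (\<Union>y\<in>nb v. P v y)"
    then obtain y where y: "E v y" "E y z" "z \<noteq> v" "\<not> E v z" by (auto simp: P_def nb_def)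
    have zV: "z \<in> V" using y inV2 by blast
    have "dist V E v y = 1" using dist1[OF v] y by blast
    then have "dist V E v z \<le> 2" using dist_step[OF v y(2)] by simp
    moreover have "dist V E v z \<noteq> 0" using dist_0[OF v zV] y by blast
    moreover have "dist V E v z \<noteq> 1" using dist1[OF v, of z] y zV by blast
    ultimately show "z \<in> L v 2" using zV by (simp add: L_def)
  qed
  have "2 * card (nb v) \<le> card (\<Union>y\<in>nb v. P v y)" by (rule UP_card) simp
  also have "\<dots> \<le> card (L v 2)" using sub finL by (rule card_mono[rotated])
  finally have c2: "2 * card (nb v) \<le> card (L v 2)" .
  then show "13 \<le> card (L v 0) + card (L v 1) + card (L v 2)" using L0 L1 deg4[OF v] by simp
  show "L v 2 \<noteq> {}" using c2 deg4[OF v] by auto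
qed


lemma main: "3 * diameter V E + 3 \<le> card V"
proof -
  define D where "D = diameter V E"
  define M where "M = {dist V E u v | u v. u \<in> V \<and> v \<in> V}"
  have Meq: "M = (\<lambda>(u, v). dist V E u v) ` (V \<times> V)" by (auto simp: M_def)
  have fM: "finite M" using finV Meq by simp
  have Vne: "V \<noteq> {}" using conn by (simp add: connected_graph_def)
  then have Mne: "M \<noteq> {}" by (auto simp: M_def)
  have "D \<in> M" using Max_in[OF fM Mne] by (simp add: D_def diameter_def M_def)
  then obtain v w where vw: "v \<in> V" "w \<in> V" "dist V E v w = D" by (auto simp: M_def)
  have le: "dist V E v z \<le> D" if "z \<in> V" for z
    using Max_ge[OF fM, of "dist V E v z"] vw that by (auto simp: D_def diameter_def M_def)
  define s where "s k = card (L v k)" for k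
  have s1: "1 \<le> s k" if "k \<le> D" for k
  proof -
    have "k \<le> dist V E v w" using vw that by simp
    then obtain z where "z \<in> V" "dist V E v z = k" using layer_ne[OF vw(1,2)] by blast
    then have "L v k \<noteq> {}" by (auto simp: L_def)
    then show ?thesis using finL by (simp add: s_def Suc_le_eq card_gt_0_iff)
  qed
  have s3: "9 \<le> s (i - 1) + s i + s (Suc i)" if "1 \<le> i" "Suc i \<le> D" for i
    using triple[OF vw(1,2) that(1)] that vw by (simp add: s_def)
  have s13: "13 \<le> s 0 + s 1 + s 2" using first13[OF vw(1)] by (simp add: s_def numeral_2_eq_2)
  have D2: "2 \<le> D"
  proof -
    obtain z where "z \<in> L v 2" using first13(2)[OF vw(1)] by blast
    then have "z \<in> V" "dist V E v z = 2" by (auto simp: L_def)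
    then show ?thesis using le[of z] by simp
  qed
  have key: "3 * j \<le> (\<Sum>k<j. s k)" if "3 \<le> j" "j \<le> Suc D" for j
    using that
  proof (induction j rule: less_induct)
    case (less j)
    have e3: "(\<Sum>k<3. s k) = s 0 + s 1 + s 2" by (simp add: numeral_3_eq_3 numeral_2_eq_2)
    consider "j = 3" | "j = 4" | "j = 5" | "6 \<le> j" using less.prems by linarith
    then show ?case
    proof cases
      case 1 then show ?thesis using s13 e3 by simp
    next
      case 2
      have "(\<Sum>k<4. s k) = (\<Sum>k<3. s k) + s 3" by (simp add: numeral_eq_Suc)
      then show ?thesis using 2 s13 e3 s1[of 3] less.prems by simp
    next
      case 3
      have "(\<Sum>k<5. s k) = (\<Sum>k<3. s k) + s 3 + s 4" by (simp add: numeral_eq_Suc)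
      then show ?thesis using 3 s13 e3 s1[of 3] s1[of 4] less.prems by simp
    next
      case 4
      obtain m where m: "j = m + 3" "3 \<le> m" using 4 by (intro that[of "j - 3"]) auto
      have IH: "3 * m \<le> (\<Sum>k<m. s k)" using less.IH[of m] m less.prems by simp
      have "(\<Sum>k<m + 3. s k) = (\<Sum>k<m. s k) + s m + s (Suc m) + s (Suc (Suc m))"
        by (simp add: numeral_eq_Suc)
      moreover have "9 \<le> s m + s (Suc m) + s (Suc (Suc m))"
        using s3[of "Suc m"] m less.prems by simp
      ultimately show ?thesis using IH m by simp
    qed
  qed
  have "(\<Sum>k<Suc D. s k) = card (\<Union>k<Suc D. L v k)"
    unfolding s_def by (rule card_UN_disjoint[symmetric]) (auto simp: finL finV L_def)
  also have "\<dots> \<le> card V" by (rule card_mono[OF finV]) (auto simp: L_def)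
  finally show ?thesis using key[of "Suc D"] D2 by (simp add: D_def)
qed


end

theorem theorem2:
  fixes V :: "'a set" and E :: "'a \<Rightarrow> 'a \<Rightarrow> bool"
  assumes "simple_graph V E"
    and "connected_graph V E"
    and "C4_free E"
    and "edge_connectivity_ge V E 4"
  shows "real (diameter V E) \<le> (real (card V) - 3) / 3"
proof -
  interpret cgraph V E using assms by unfold_locales
  have "real (3 * diameter V E + 3) \<le> real (card V)" using main by (simp only: of_nat_le_iff)
  then show ?thesis by simp
qed

end
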